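(* Let $A$ be a flexible 0-dialgebra with involution which satisfies, for all $x,y,z\in A$ and each $\circ\in\{\dashv,\times,\vdash\}$, the identities $(x,y,z)_\circ+(x^\ast,y,z)_\circ=0$, $(x,y,z)_\circ+(x,y^\ast,z)_\circ=0$ and $(x,y,z)_\circ+(x,y,z^\ast)_\circ=0$. Then for all $x,y,z\in A$: $(x,y,z)_\dashv+(z^\ast,y^\ast,x)_\vdash=0$, $(x,y,z)_\dashv+(z,y^\ast,x^\ast)_\vdash=0$, $(x,y,z)_\times+(z^\ast,y^\ast,x)_\times=0$, $(x,y,z)_\times+(z,y^\ast,x^\ast)_\times=0$, $(x,y,z)_\dashv-(x^\ast,y^\ast,z)_\dashv=0$, and $(x,y,z)_\times-(x^\ast,y^\ast,z)_\times=0$.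
   Context: A 0-dialgebra with involution is a vector space with bilinear operations $\dashv,\vdash$ satisfying $a\dashv(b\dashv c)=a\dashv(b\vdash c)$ and $(a\dashv b)\vdash c=(a\vdash b)\vdash c$, together with a linear map $\ast$ with $(a^\ast)^\ast=a$, $(a\dashv b)^\ast=b^\ast\vdash a^\ast$, $(a\vdash b)^\ast=b^\ast\dashv a^\ast$. Associators: $(a,b,c)_\dashv=(a\dashv b)\dashv c-a\dashv(b\dashv c)$, $(a,b,c)_\times=(a\vdash b)\dashv c-a\vdash(b\dashv c)$, $(a,b,c)_\vdash=(a\vdash b)\vdash c-a\vdash(b\vdash c)$. The 0-dialgebra is flexible if $(a,b,c)_\dashv+(c,b,a)_\vdash=0$ and $(a,b,c)_\times+(c,b,a)_\times=0$ for all $a,b,c$. *)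

theory Defs
  imports Complex_Main
begin

definition bilinear_op :: "('k::field \<Rightarrow> 'v::ab_group_add \<Rightarrow> 'v) \<Rightarrow> ('v \<Rightarrow> 'v \<Rightarrow> 'v) \<Rightarrow> bool" where
  "bilinear_op scale f \<longleftrightarrow>
     (\<forall>x. Vector_Spaces.linear scale scale (f x)) \<and> (\<forall>y. Vector_Spaces.linear scale scale (\<lambda>x. f x y))"

definition zero_dialgebra_inv ::
  "('k::field \<Rightarrow> 'v::ab_group_add \<Rightarrow> 'v) \<Rightarrow> ('v \<Rightarrow> 'v \<Rightarrow> 'v) \<Rightarrow> ('v \<Rightarrow> 'v \<Rightarrow> 'v) \<Rightarrow> ('v \<Rightarrow> 'v) \<Rightarrow> bool" where
  "zero_dialgebra_inv scale l r s \<longleftrightarrow>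
     vector_space scale \<and> bilinear_op scale l \<and> bilinear_op scale r \<and>
     (\<forall>a b c. l a (l b c) = l a (r b c)) \<and>
     (\<forall>a b c. r (l a b) c = r (r a b) c) \<and>
     Vector_Spaces.linear scale scale s \<and>
     (\<forall>a. s (s a) = a) \<and>
     (\<forall>a b. s (l a b) = r (s b) (s a)) \<and>
     (\<forall>a b. s (r a b) = l (s b) (s a))"

text \<open>Associators; l is the left product (dashv), r the right product (vdash).\<close>

definition assoc_l :: "('v::ab_group_add \<Rightarrow> 'v \<Rightarrow> 'v) \<Rightarrow> ('v \<Rightarrow> 'v \<Rightarrow> 'v) \<Rightarrow> 'v \<Rightarrow> 'v \<Rightarrow> 'v \<Rightarrow> 'v" where
  "assoc_l l r a b c = l (l a b) c - l a (l b c)"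

definition assoc_x :: "('v::ab_group_add \<Rightarrow> 'v \<Rightarrow> 'v) \<Rightarrow> ('v \<Rightarrow> 'v \<Rightarrow> 'v) \<Rightarrow> 'v \<Rightarrow> 'v \<Rightarrow> 'v \<Rightarrow> 'v" where
  "assoc_x l r a b c = l (r a b) c - r a (l b c)"

definition assoc_r :: "('v::ab_group_add \<Rightarrow> 'v \<Rightarrow> 'v) \<Rightarrow> ('v \<Rightarrow> 'v \<Rightarrow> 'v) \<Rightarrow> 'v \<Rightarrow> 'v \<Rightarrow> 'v \<Rightarrow> 'v" where
  "assoc_r l r a b c = r (r a b) c - r a (r b c)"

definition flexible_dialg :: "('v::ab_group_add \<Rightarrow> 'v \<Rightarrow> 'v) \<Rightarrow> ('v \<Rightarrow> 'v \<Rightarrow> 'v) \<Rightarrow> bool" where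
  "flexible_dialg l r \<longleftrightarrow>
     (\<forall>a b c. assoc_l l r a b c + assoc_r l r c b a = 0) \<and>
     (\<forall>a b c. assoc_x l r a b c + assoc_x l r c b a = 0)"

end

theory Submission
  imports Defs
begin

theorem lemma7p4:
  fixes scale :: "'k::field \<Rightarrow> 'v::ab_group_add \<Rightarrow> 'v"
    and l r :: "'v \<Rightarrow> 'v \<Rightarrow> 'v" and s :: "'v \<Rightarrow> 'v"
  assumes "zero_dialgebra_inv scale l r s"
    and "flexible_dialg l r"
    and "\<forall>assoc \<in> {assoc_l l r, assoc_x l r, assoc_r l r}. \<forall>x y z.
           assoc x y z + assoc (s x) y z = 0 \<and>
           assoc x y z + assoc x (s y) z = 0 \<and>
           assoc x y z + assoc x y (s z) = 0"
  shows "\<forall>x y z.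
           assoc_l l r x y z + assoc_r l r (s z) (s y) x = 0 \<and>
           assoc_l l r x y z + assoc_r l r z (s y) (s x) = 0 \<and>
           assoc_x l r x y z + assoc_x l r (s z) (s y) x = 0 \<and>
           assoc_x l r x y z + assoc_x l r z (s y) (s x) = 0 \<and>
           assoc_l l r x y z - assoc_l l r (s x) (s y) z = 0 \<and>
           assoc_x l r x y z - assoc_x l r (s x) (s y) z = 0"
proof (intro allI)
  fix x y z
  let ?L = "assoc_l l r" and ?X = "assoc_x l r" and ?R = "assoc_r l r"
  have H: "\<And>A a b c. A \<in> {?L, ?X, ?R} \<Longrightarrow> A (s a) b c = - A a b c \<and> A a (s b) c = - A a b c \<and> A a b (s c) = - A a b c"
  proof -
    fix A a b c assume "A \<in> {?L, ?X, ?R}"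
    with assms(3) have "A a b c + A (s a) b c = 0 \<and> A a b c + A a (s b) c = 0 \<and> A a b c + A a b (s c) = 0" by blast
    thus "A (s a) b c = - A a b c \<and> A a (s b) c = - A a b c \<and> A a b (s c) = - A a b c"
      by (metis add.commute add_eq_0_iff)
  qed
  have F1: "?L x y z + ?R z y x = 0" and F2: "?X x y z + ?X z y x = 0"
    using assms(2) unfolding flexible_dialg_def by auto
  have r1: "?R (s z) (s y) x = ?R z y x" using H[of ?R] by simp
  have r2: "?R z (s y) (s x) = ?R z y x" using H[of ?R] by simp
  have x1: "?X (s z) (s y) x = ?X z y x" using H[of ?X] by simp
  have x2: "?X z (s y) (s x) = ?X z y x" using H[of ?X] by simp
  have l3: "?L (s x) (s y) z = ?L x y z" using H[of ?L] by simp
  have x3: "?X (s x) (s y) z = ?X x y z" using H[of ?X] by simp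
  show "?L x y z + ?R (s z) (s y) x = 0 \<and> ?L x y z + ?R z (s y) (s x) = 0 \<and>
        ?X x y z + ?X (s z) (s y) x = 0 \<and> ?X x y z + ?X z (s y) (s x) = 0 \<and>
        ?L x y z - ?L (s x) (s y) z = 0 \<and> ?X x y z - ?X (s x) (s y) z = 0"
    using F1 F2 r1 r2 x1 x2 l3 x3 by simp
qed

end
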